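(* Any quantum algorithm that solves \textsc{AmpFil}$(\mathcal{D},\epsilon,\tau)$ requires $\Omega\big(\frac1\epsilon+\frac1\tau\big)$ queries.
   Context: \textsc{AmpFil}$(\mathcal{D},\epsilon,\tau)$ (amplitude filtering): one is given oracle access to a quantum circuit $O_D$ with output state $\sum_x\alpha_x|x\rangle|\xi_x\rangle$ (measured in the standard basis it induces a distribution $\mathcal{D}$ with $p_x=|\alpha_x|^2$); given a threshold $\tau$ and accuracy $\epsilon$, the task is to decide (with bounded error) whether some $x$ has $|\alpha_x|\ge\tau$ or every $x$ has $|\alpha_x|<\tau-\epsilon$, under the promise that one of the two holds. The query complexity is the number of calls to $O_D$. *)

theory Defs
  imports "Jordan_Normal_Form.Matrix"
begin

definition cadj :: "complex mat \<Rightarrow> complex mat" where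
  "cadj A = mat (dim_col A) (dim_row A) (\<lambda>(i,j). cnj (A $$ (j,i)))"

definition is_unitary :: "nat \<Rightarrow> complex mat \<Rightarrow> bool" where
  "is_unitary d U \<longleftrightarrow> U \<in> carrier_mat d d \<and> cadj U * U = 1\<^sub>m d \<and> U * cadj U = 1\<^sub>m d"

(* The oracle O_D is a unitary on C^n (x) C^m (basis index x*m + j, x < n, j < m):
   register |x> of dimension n, garbage register of dimension m.
   Its output state is O_D |0> = sum_x alpha_x |x>|xi_x>. *)

definition oracle_state :: "nat \<Rightarrow> nat \<Rightarrow> complex mat \<Rightarrow> complex vec" where
  "oracle_state n m U = U *\<^sub>v unit_vec (n * m) 0"

(* |alpha_x| = norm of the x-block of the output state (p_x = |alpha_x|^2) *)
definition amp_abs :: "nat \<Rightarrow> nat \<Rightarrow> complex mat \<Rightarrow> nat \<Rightarrow> real" where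
  "amp_abs n m U x = sqrt (\<Sum>j<m. (cmod (oracle_state n m U $ (x * m + j)))\<^sup>2)"

definition ampfil_yes :: "nat \<Rightarrow> nat \<Rightarrow> real \<Rightarrow> complex mat \<Rightarrow> bool" where
  "ampfil_yes n m \<tau> U \<longleftrightarrow> (\<exists>x<n. amp_abs n m U x \<ge> \<tau>)"

definition ampfil_no :: "nat \<Rightarrow> nat \<Rightarrow> real \<Rightarrow> real \<Rightarrow> complex mat \<Rightarrow> bool" where
  "ampfil_no n m \<epsilon> \<tau> U \<longleftrightarrow> (\<forall>x<n. amp_abs n m U x < \<tau> - \<epsilon>)"

(* A query algorithm with oracle dimension D works on C^D (x) C^w
   (basis index i*w + k, i < D, k < w).  A (generalised controlled) query
   applies the oracle O (= U or U^dagger) to the first register when the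
   workspace basis state k lies in the control set C, identity otherwise.
   C = {0..<w} gives a plain query, C a half gives a controlled query. *)
definition query_op :: "nat \<Rightarrow> nat \<Rightarrow> nat set \<Rightarrow> complex mat \<Rightarrow> complex mat" where
  "query_op D w C Orc = mat (D * w) (D * w) (\<lambda>(r,s).
      if r mod w = s mod w then
        (if r mod w \<in> C then Orc $$ (r div w, s div w)
         else (if r div w = s div w then 1 else 0))
      else 0)"

record qalg =
  work_dim :: nat
  num_queries :: nat
  gates :: "nat \<Rightarrow> complex mat"
  ctrl :: "nat \<Rightarrow> nat set"
  dagger :: "nat \<Rightarrow> bool"
  accept :: "nat set"

definition wf_qalg :: "nat \<Rightarrow> qalg \<Rightarrow> bool" where
  "wf_qalg D A \<longleftrightarrow> work_dim A \<ge> 1 \<and>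
     (\<forall>t\<le>num_queries A. is_unitary (D * work_dim A) (gates A t)) \<and>
     (\<forall>t<num_queries A. ctrl A t \<subseteq> {..<work_dim A})"

fun run_state :: "nat \<Rightarrow> qalg \<Rightarrow> complex mat \<Rightarrow> nat \<Rightarrow> complex vec" where
  "run_state D A U 0 = gates A 0 *\<^sub>v unit_vec (D * work_dim A) 0"
| "run_state D A U (Suc t) =
     gates A (Suc t) *\<^sub>v (query_op D (work_dim A) (ctrl A t)
        (if dagger A t then cadj U else U) *\<^sub>v run_state D A U t)"

definition accept_prob :: "nat \<Rightarrow> qalg \<Rightarrow> complex mat \<Rightarrow> real" where
  "accept_prob D A U =
     (\<Sum>j\<in>accept A \<inter> {..<D * work_dim A}. (cmod (run_state D A U (num_queries A) $ j))\<^sup>2)"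

definition solves_ampfil :: "nat \<Rightarrow> nat \<Rightarrow> real \<Rightarrow> real \<Rightarrow> qalg \<Rightarrow> bool" where
  "solves_ampfil n m \<epsilon> \<tau> A \<longleftrightarrow> wf_qalg (n * m) A \<and>
     (\<forall>U. is_unitary (n * m) U \<longrightarrow>
        (ampfil_yes n m \<tau> U \<longrightarrow> accept_prob (n * m) A U \<ge> 2/3) \<and>
        (ampfil_no n m \<epsilon> \<tau> U \<longrightarrow> accept_prob (n * m) A U \<le> 1/3))"

end

theory Submission
  imports Defs "HOL-Analysis.L2_Norm"
begin

lemma sum_split_mult:
  fixes f :: "nat \<Rightarrow> 'a::comm_monoid_add"
  shows "(\<Sum>r<n*m. f r) = (\<Sum>x<n. \<Sum>j<m. f (x*m+j))"
proof -
  have "(\<Sum>r<n*m. f r) = (\<Sum>x<n. sum f {x*m..<x*m+m})"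
    by (simp add: sum.nat_group)
  also have "\<dots> = (\<Sum>x<n. \<Sum>j<m. f (x*m+j))"
  proof (rule sum.cong[OF refl])
    fix x
    show "sum f {x*m..<x*m+m} = (\<Sum>j<m. f (x*m+j))"
      using sum.shift_bounds_nat_ivl[of f 0 "x*m" m]
      by (simp add: atLeast0LessThan add.commute)
  qed
  finally show ?thesis .
qed

lemma mv_entry:
  assumes "G \<in> carrier_mat d d" "dim_vec v = d" "i < d"
  shows "(G *\<^sub>v v) $ i = (\<Sum>j<d. G $$ (i,j) * v $ j)"
  using assms by (simp add: scalar_prod_def atLeast0LessThan)

lemma unitary_orth:
  assumes "is_unitary d G" "j < d" "k < d"
  shows "(\<Sum>i<d. cnj (G $$ (i,j)) * G $$ (i,k)) = (if j = k then 1 else 0)"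
proof -
  have G: "G \<in> carrier_mat d d" and E: "cadj G * G = 1\<^sub>m d" using assms unfolding is_unitary_def by auto
  have "(cadj G * G) $$ (j,k) = (\<Sum>i<d. cnj (G $$ (i,j)) * G $$ (i,k))"
    using G assms(2,3) by (simp add: cadj_def scalar_prod_def atLeast0LessThan)
  then show ?thesis using E assms(2,3) by simp
qed

lemma unitary_sq:
  assumes U: "is_unitary d G" and v: "dim_vec v = d"
  shows "(\<Sum>i<d. (cmod ((G *\<^sub>v v) $ i))\<^sup>2) = (\<Sum>i<d. (cmod (v $ i))\<^sup>2)"
proof -
  have G: "G \<in> carrier_mat d d" using U unfolding is_unitary_def by auto
  have "complex_of_real (\<Sum>i<d. (cmod ((G *\<^sub>v v) $ i))\<^sup>2)
      = (\<Sum>i<d. cnj (\<Sum>j<d. G $$ (i,j) * v $ j) * (\<Sum>k<d. G $$ (i,k) * v $ k))"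
    unfolding of_real_sum
  proof (rule sum.cong[OF refl])
    fix i assume "i \<in> {..<d}"
    then have "(G *\<^sub>v v) $ i = (\<Sum>j<d. G $$ (i,j) * v $ j)" using mv_entry[OF G v] by simp
    then show "complex_of_real ((cmod ((G *\<^sub>v v) $ i))\<^sup>2) = cnj (\<Sum>j<d. G $$ (i,j) * v $ j) * (\<Sum>k<d. G $$ (i,k) * v $ k)"
      by (simp only: complex_norm_square mult.commute)
  qed
  also have "\<dots> = (\<Sum>i<d. \<Sum>j<d. \<Sum>k<d. cnj (v $ j) * v $ k * (cnj (G $$ (i,j)) * G $$ (i,k)))"
    apply (simp add: sum_product algebra_simps)
    by (rule sum.cong[OF refl], rule sum.swap)
  also have "\<dots> = (\<Sum>j<d. \<Sum>k<d. \<Sum>i<d. cnj (v $ j) * v $ k * (cnj (G $$ (i,j)) * G $$ (i,k)))"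
    by (subst sum.swap, rule sum.cong[OF refl], rule sum.swap)
  also have "\<dots> = (\<Sum>j<d. \<Sum>k<d. cnj (v $ j) * v $ k * (if j = k then 1 else 0))"
    using unitary_orth[OF U] by (simp add: sum_distrib_left[symmetric])
  also have "\<dots> = (\<Sum>j<d. cnj (v $ j) * v $ j)"
    by (simp add: if_distrib cong: if_cong)
  also have "\<dots> = complex_of_real (\<Sum>i<d. (cmod (v $ i))\<^sup>2)"
    by (simp only: of_real_sum complex_norm_square mult.commute)
  finally show ?thesis using of_real_eq_iff by blast
qed

lemma unitary_L2_diff:
  assumes U: "is_unitary d G" and a: "dim_vec a = d" and b: "dim_vec b = d"
  shows "L2_set (\<lambda>i. cmod ((G *\<^sub>v a) $ i - (G *\<^sub>v b) $ i)) {..<d}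
       = L2_set (\<lambda>i. cmod (a $ i - b $ i)) {..<d}"
proof -
  have G: "G \<in> carrier_mat d d" using U unfolding is_unitary_def by auto
  have av: "a \<in> carrier_vec d" and bv: "b \<in> carrier_vec d" using a b by (auto intro: carrier_vecI)
  have E: "G *\<^sub>v (a - b) = G *\<^sub>v a - G *\<^sub>v b"
    by (rule mult_minus_distrib_mat_vec[OF G av bv])
  have dG: "dim_row G = d" using G by auto
  have "\<And>i. i < d \<Longrightarrow> (G *\<^sub>v a) $ i - (G *\<^sub>v b) $ i = (G *\<^sub>v (a - b)) $ i"
    unfolding E by (subst index_minus_vec(1)) (simp_all add: dG)
  then have "L2_set (\<lambda>i. cmod ((G *\<^sub>v a) $ i - (G *\<^sub>v b) $ i)) {..<d}
       = L2_set (\<lambda>i. cmod ((G *\<^sub>v (a - b)) $ i)) {..<d}"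
    by (intro L2_set_cong) auto
  also have "\<dots> = L2_set (\<lambda>i. cmod ((a - b) $ i)) {..<d}"
    unfolding L2_set_def using unitary_sq[OF U, of "a - b"] b by simp
  also have "\<dots> = L2_set (\<lambda>i. cmod (a $ i - b $ i)) {..<d}"
    by (intro L2_set_cong) (use b in auto)
  finally show ?thesis .
qed

lemma query_entry:
  assumes "i < D" "k < w" "dim_vec x = D*w"
  shows "(query_op D w C Orc *\<^sub>v x) $ (i*w+k)
       = (if k \<in> C then (\<Sum>j<D. Orc $$ (i,j) * x $ (j*w+k)) else x $ (i*w+k))"
proof -
  have iw: "i*w+k < D*w"
  proof -
    have "i*w+k < i*w + w" using assms by simp
    also have "\<dots> = (Suc i)*w" by simp
    also have "\<dots> \<le> D*w" using assms by (intro mult_right_mono) auto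
    finally show ?thesis .
  qed
  have jl: "j*w+l < D*w" if "j < D" "l < w" for j l
  proof -
    have "j*w+l < j*w + w" using that by simp
    also have "\<dots> = (Suc j)*w" by simp
    also have "\<dots> \<le> D*w" using that by (intro mult_right_mono) auto
    finally show ?thesis .
  qed
  have Q: "query_op D w C Orc \<in> carrier_mat (D*w) (D*w)" by (simp add: query_op_def)
  have "(query_op D w C Orc *\<^sub>v x) $ (i*w+k)
      = (\<Sum>s<D*w. query_op D w C Orc $$ (i*w+k, s) * x $ s)"
    by (rule mv_entry[OF Q assms(3) iw])
  also have "\<dots> = (\<Sum>j<D. \<Sum>l<w. query_op D w C Orc $$ (i*w+k, j*w+l) * x $ (j*w+l))"
    by (rule sum_split_mult[where f="\<lambda>s. query_op D w C Orc $$ (i*w+k, s) * x $ s"])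
  also have "\<dots> = (\<Sum>j<D. \<Sum>l<w. (if l = k then (if k \<in> C then Orc $$ (i,j) else (if i = j then 1 else 0)) else 0) * x $ (j*w+l))"
  proof (intro sum.cong refl)
    fix j l assume "j \<in> {..<D}" "l \<in> {..<w}"
    show "query_op D w C Orc $$ (i*w+k, j*w+l) * x $ (j*w+l) = (if l = k then (if k \<in> C then Orc $$ (i,j) else (if i = j then 1 else 0)) else 0) * x $ (j*w+l)"
    proof -
      have "j < D" "l < w" using \<open>j \<in> {..<D}\<close> \<open>l \<in> {..<w}\<close> by auto
      have m1: "(i*w+k) mod w = k" "(i*w+k) div w = i" using assms(2) by auto
      have m2: "(j*w+l) mod w = l" "(j*w+l) div w = j" using \<open>l < w\<close> by auto
      have "query_op D w C Orc $$ (i*w+k, j*w+l) = (if l = k then (if k \<in> C then Orc $$ (i,j) else (if i = j then 1 else 0)) else 0)"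
        unfolding query_op_def index_mat(1)[OF iw jl[OF \<open>j < D\<close> \<open>l < w\<close>]] prod.case m1 m2 by simp
      then show ?thesis by simp
    qed
  qed
  also have "\<dots> = (\<Sum>j<D. (if k \<in> C then Orc $$ (i,j) else (if i = j then 1 else 0)) * x $ (j*w+k))"
  proof (rule sum.cong[OF refl])
    fix j
    let ?c = "(if k \<in> C then Orc $$ (i,j) else (if i = j then 1 else 0))"
    have "(\<Sum>l<w. (if l = k then ?c else 0) * x $ (j*w+l)) = (\<Sum>l<w. (if l = k then ?c * x $ (j*w+l) else 0))"
      by (rule sum.cong) auto
    also have "\<dots> = ?c * x $ (j*w+k)" using assms(2) by (subst sum.delta) auto
    finally show "(\<Sum>l<w. (if l = k then ?c else 0) * x $ (j*w+l)) = ?c * x $ (j*w+k)" .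
  qed
  also have "\<dots> = (if k \<in> C then (\<Sum>j<D. Orc $$ (i,j) * x $ (j*w+k)) else x $ (i*w+k))"
  proof (cases "k \<in> C")
    case False
    have "(\<Sum>j<D. (if i = j then 1 else 0) * x $ (j*w+k)) = (\<Sum>j<D. (if j = i then x $ (j*w+k) else 0))"
      by (rule sum.cong) auto
    also have "\<dots> = x $ (i*w+k)" using assms(1) by (subst sum.delta) auto
    finally show ?thesis using False by simp
  qed simp
  finally show ?thesis .
qed

lemma slice_bound:
  fixes f g :: "nat \<Rightarrow> real" and D w :: nat
  assumes H: "\<And>k. k < w \<Longrightarrow> L2_set (\<lambda>i. f (i*w+k)) {..<D} \<le> \<delta> * L2_set (\<lambda>i. g (i*w+k)) {..<D}"
    and d: "\<delta> \<ge> 0"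
  shows "L2_set f {..<D*w} \<le> \<delta> * L2_set g {..<D*w}"
proof -
  have sq: "(\<Sum>i<D. (f (i*w+k))\<^sup>2) \<le> \<delta>\<^sup>2 * (\<Sum>i<D. (g (i*w+k))\<^sup>2)" if "k < w" for k
  proof -
    have "(L2_set (\<lambda>i. f (i*w+k)) {..<D})\<^sup>2 \<le> (\<delta> * L2_set (\<lambda>i. g (i*w+k)) {..<D})\<^sup>2"
      using H[OF that] by (intro power_mono) auto
    then show ?thesis unfolding L2_set_def
      by (simp add: power_mult_distrib sum_nonneg)
  qed
  have sw: "(\<Sum>r<D*w. (h r)\<^sup>2) = (\<Sum>k<w. \<Sum>i<D. (h (i*w+k))\<^sup>2)" for h :: "nat \<Rightarrow> real"
    unfolding sum_split_mult by (rule sum.swap)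
  have "(\<Sum>r<D*w. (f r)\<^sup>2) = (\<Sum>k<w. \<Sum>i<D. (f (i*w+k))\<^sup>2)"
    by (rule sw)
  also have "\<dots> \<le> (\<Sum>k<w. \<delta>\<^sup>2 * (\<Sum>i<D. (g (i*w+k))\<^sup>2))"
    by (intro sum_mono sq) auto
  also have "\<dots> = \<delta>\<^sup>2 * (\<Sum>r<D*w. (g r)\<^sup>2)"
    by (simp only: sw sum_distrib_left)
  finally have "sqrt (\<Sum>r<D*w. (f r)\<^sup>2) \<le> sqrt (\<delta>\<^sup>2 * (\<Sum>r<D*w. (g r)\<^sup>2))"
    by (rule real_sqrt_le_mono)
  then show ?thesis unfolding L2_set_def using d by (simp add: real_sqrt_mult)
qed


lemma slice_mv:
  assumes "U \<in> carrier_mat D D" "i < D"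
  shows "(U *\<^sub>v vec D (\<lambda>j. x $ (j*w+k))) $ i = (\<Sum>j<D. U $$ (i,j) * x $ (j*w+k))"
  using mv_entry[OF assms(1) _ assms(2), of "vec D (\<lambda>j. x $ (j*w+k))"] by simp

lemma query_unitary_diff:
  assumes U: "is_unitary D U" and x: "dim_vec x = D*w" and y: "dim_vec y = D*w"
  shows "L2_set (\<lambda>r. cmod ((query_op D w C U *\<^sub>v x) $ r - (query_op D w C U *\<^sub>v y) $ r)) {..<D*w}
      \<le> L2_set (\<lambda>r. cmod (x $ r - y $ r)) {..<D*w}"
proof -
  have UC: "U \<in> carrier_mat D D" using U unfolding is_unitary_def by auto
  have "L2_set (\<lambda>r. cmod ((query_op D w C U *\<^sub>v x) $ r - (query_op D w C U *\<^sub>v y) $ r)) {..<D*w}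
      \<le> 1 * L2_set (\<lambda>r. cmod (x $ r - y $ r)) {..<D*w}"
  proof (rule slice_bound)
    fix k assume k: "k < w"
    let ?sx = "vec D (\<lambda>j. x $ (j*w+k))" and ?sy = "vec D (\<lambda>j. y $ (j*w+k))"
    show "L2_set (\<lambda>i. cmod ((query_op D w C U *\<^sub>v x) $ (i*w+k) - (query_op D w C U *\<^sub>v y) $ (i*w+k))) {..<D}
      \<le> 1 * L2_set (\<lambda>i. cmod (x $ (i*w+k) - y $ (i*w+k))) {..<D}"
    proof (cases "k \<in> C")
      case True
      have "L2_set (\<lambda>i. cmod ((query_op D w C U *\<^sub>v x) $ (i*w+k) - (query_op D w C U *\<^sub>v y) $ (i*w+k))) {..<D}
          = L2_set (\<lambda>i. cmod ((U *\<^sub>v ?sx) $ i - (U *\<^sub>v ?sy) $ i)) {..<D}"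
        by (rule L2_set_cong) (simp_all add: query_entry[OF _ k x] query_entry[OF _ k y] slice_mv[OF UC] True)
      also have "\<dots> = L2_set (\<lambda>i. cmod (?sx $ i - ?sy $ i)) {..<D}"
        by (rule unitary_L2_diff[OF U]) auto
      also have "\<dots> = L2_set (\<lambda>i. cmod (x $ (i*w+k) - y $ (i*w+k))) {..<D}"
        by (rule L2_set_cong) auto
      finally show ?thesis by simp
    next
      case False
      show ?thesis
        by (simp, rule order_eq_refl, rule L2_set_cong) (simp_all add: query_entry[OF _ k x] query_entry[OF _ k y] False)
    qed
  qed simp
  then show ?thesis by simp
qed

lemma query_oracle_diff:
  assumes UC: "U \<in> carrier_mat D D" and VC: "V \<in> carrier_mat D D" and d: "\<delta> \<ge> 0"
    and HB: "\<And>s. dim_vec s = D \<Longrightarrow> L2_set (\<lambda>i. cmod ((U *\<^sub>v s) $ i - (V *\<^sub>v s) $ i)) {..<D}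
               \<le> \<delta> * L2_set (\<lambda>i. cmod (s $ i)) {..<D}"
    and x: "dim_vec x = D*w"
  shows "L2_set (\<lambda>r. cmod ((query_op D w C U *\<^sub>v x) $ r - (query_op D w C V *\<^sub>v x) $ r)) {..<D*w}
      \<le> \<delta> * L2_set (\<lambda>r. cmod (x $ r)) {..<D*w}"
proof (rule slice_bound[OF _ d])
  fix k assume k: "k < w"
  let ?sx = "vec D (\<lambda>j. x $ (j*w+k))"
  show "L2_set (\<lambda>i. cmod ((query_op D w C U *\<^sub>v x) $ (i*w+k) - (query_op D w C V *\<^sub>v x) $ (i*w+k))) {..<D}
      \<le> \<delta> * L2_set (\<lambda>i. cmod (x $ (i*w+k))) {..<D}"
  proof (cases "k \<in> C")
    case True
    have "L2_set (\<lambda>i. cmod ((query_op D w C U *\<^sub>v x) $ (i*w+k) - (query_op D w C V *\<^sub>v x) $ (i*w+k))) {..<D}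
        = L2_set (\<lambda>i. cmod ((U *\<^sub>v ?sx) $ i - (V *\<^sub>v ?sx) $ i)) {..<D}"
      by (rule L2_set_cong) (simp_all add: query_entry[OF _ k x] slice_mv[OF UC] slice_mv[OF VC] True)
    also have "\<dots> \<le> \<delta> * L2_set (\<lambda>i. cmod (?sx $ i)) {..<D}"
      by (rule HB) simp
    also have "L2_set (\<lambda>i. cmod (?sx $ i)) {..<D} = L2_set (\<lambda>i. cmod (x $ (i*w+k))) {..<D}"
      by (rule L2_set_cong) auto
    finally show ?thesis .
  next
    case False
    have "L2_set (\<lambda>i. cmod ((query_op D w C U *\<^sub>v x) $ (i*w+k) - (query_op D w C V *\<^sub>v x) $ (i*w+k))) {..<D} = 0"
      by (rule L2_set_0') (simp add: query_entry[OF _ k x] False)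
    then show ?thesis using d by simp
  qed
qed


lemma L2_tri:
  "L2_set (\<lambda>i. cmod (a i - c i)) A \<le> L2_set (\<lambda>i. cmod (a i - b i)) A + L2_set (\<lambda>i. cmod (b i - c i)) A"
proof -
  have "L2_set (\<lambda>i. cmod (a i - c i)) A \<le> L2_set (\<lambda>i. cmod (a i - b i) + cmod (b i - c i)) A"
  proof (rule L2_set_mono)
    fix i
    have "a i - c i = (a i - b i) + (b i - c i)" by simp
    then show "cmod (a i - c i) \<le> cmod (a i - b i) + cmod (b i - c i)"
      by (metis norm_triangle_ineq)
  qed simp
  also have "\<dots> \<le> L2_set (\<lambda>i. cmod (a i - b i)) A + L2_set (\<lambda>i. cmod (b i - c i)) A"
    by (rule L2_set_triangle_ineq)
  finally show ?thesis .
qed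

lemma mv_zero:
  assumes "M \<in> carrier_mat nr nc" "r < nr"
  shows "(M *\<^sub>v 0\<^sub>v nc) $ r = 0"
  using assms by simp

lemma unitary_L2:
  assumes U: "is_unitary d G" and a: "dim_vec a = d"
  shows "L2_set (\<lambda>i. cmod ((G *\<^sub>v a) $ i)) {..<d} = L2_set (\<lambda>i. cmod (a $ i)) {..<d}"
proof -
  have G: "G \<in> carrier_mat d d" using U unfolding is_unitary_def by auto
  have "L2_set (\<lambda>i. cmod ((G *\<^sub>v a) $ i)) {..<d} = L2_set (\<lambda>i. cmod ((G *\<^sub>v a) $ i - (G *\<^sub>v 0\<^sub>v d) $ i)) {..<d}"
    by (rule L2_set_cong) (use G in auto)
  also have "\<dots> = L2_set (\<lambda>i. cmod (a $ i - 0\<^sub>v d $ i)) {..<d}"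
    by (rule unitary_L2_diff[OF U a]) simp
  also have "\<dots> = L2_set (\<lambda>i. cmod (a $ i)) {..<d}"
    by (rule L2_set_cong) auto
  finally show ?thesis .
qed

lemma query_unitary_L2:
  assumes U: "is_unitary D U" and x: "dim_vec x = D*w"
  shows "L2_set (\<lambda>r. cmod ((query_op D w C U *\<^sub>v x) $ r)) {..<D*w} \<le> L2_set (\<lambda>r. cmod (x $ r)) {..<D*w}"
proof -
  have Q: "query_op D w C U \<in> carrier_mat (D*w) (D*w)" by (simp add: query_op_def)
  have "L2_set (\<lambda>r. cmod ((query_op D w C U *\<^sub>v x) $ r)) {..<D*w}
      = L2_set (\<lambda>r. cmod ((query_op D w C U *\<^sub>v x) $ r - (query_op D w C U *\<^sub>v 0\<^sub>v (D*w)) $ r)) {..<D*w}"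
    by (rule L2_set_cong) (use Q in auto)
  also have "\<dots> \<le> L2_set (\<lambda>r. cmod (x $ r - 0\<^sub>v (D*w) $ r)) {..<D*w}"
    by (rule query_unitary_diff[OF U x]) simp
  also have "\<dots> = L2_set (\<lambda>r. cmod (x $ r)) {..<D*w}"
    by (rule L2_set_cong) auto
  finally show ?thesis .
qed

lemma unit_vec_L2: "L2_set (\<lambda>r. cmod (unit_vec n 0 $ r)) {..<n} \<le> 1"
proof (cases "n = 0")
  case True then show ?thesis by simp
next
  case False
  have "(\<Sum>r<n. (cmod (unit_vec n 0 $ r))\<^sup>2) = (\<Sum>r<n. if r = 0 then 1 else 0)"
    by (rule sum.cong) (use False in auto)
  also have "\<dots> = 1" using False by (subst sum.delta) auto
  finally show ?thesis unfolding L2_set_def by simp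
qed

lemma hybrid:
  assumes wf: "wf_qalg D A" and U: "is_unitary D U" and V: "is_unitary D V"
    and hU: "cadj U = U" and hV: "cadj V = V" and d: "\<delta> \<ge> 0"
    and HB: "\<And>s. dim_vec s = D \<Longrightarrow> L2_set (\<lambda>i. cmod ((U *\<^sub>v s) $ i - (V *\<^sub>v s) $ i)) {..<D}
               \<le> \<delta> * L2_set (\<lambda>i. cmod (s $ i)) {..<D}"
  shows "t \<le> num_queries A \<Longrightarrow> dim_vec (run_state D A U t) = D * work_dim A \<and> dim_vec (run_state D A V t) = D * work_dim A
     \<and> L2_set (\<lambda>r. cmod (run_state D A V t $ r)) {..<D * work_dim A} \<le> 1
     \<and> L2_set (\<lambda>r. cmod (run_state D A U t $ r - run_state D A V t $ r)) {..<D * work_dim A} \<le> real t * \<delta>"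
proof (induction t)
  case 0
  let ?w = "work_dim A"
  have G: "is_unitary (D * ?w) (gates A 0)" using wf unfolding wf_qalg_def by auto
  then have GC: "gates A 0 \<in> carrier_mat (D * ?w) (D * ?w)" unfolding is_unitary_def by auto
  have "L2_set (\<lambda>r. cmod (run_state D A V 0 $ r)) {..<D * ?w} = L2_set (\<lambda>r. cmod (unit_vec (D * ?w) 0 $ r)) {..<D * ?w}"
    by (simp only: run_state.simps, rule unitary_L2[OF G]) simp
  moreover have "L2_set (\<lambda>r. 0) {..<D * ?w} = 0" by (simp add: L2_set_def)
  ultimately show ?case using GC unit_vec_L2[of "D * ?w"] by simp
next
  case (Suc t)
  let ?w = "work_dim A"
  let ?n = "D * ?w"
  have t: "t < num_queries A" using Suc.prems by simp
  from Suc.IH t have IH: "dim_vec (run_state D A U t) = ?n" "dim_vec (run_state D A V t) = ?n"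
     "L2_set (\<lambda>r. cmod (run_state D A V t $ r)) {..<?n} \<le> 1"
     "L2_set (\<lambda>r. cmod (run_state D A U t $ r - run_state D A V t $ r)) {..<?n} \<le> real t * \<delta>" by auto
  have G: "is_unitary ?n (gates A (Suc t))" using wf Suc.prems unfolding wf_qalg_def by auto
  then have GC: "gates A (Suc t) \<in> carrier_mat ?n ?n" unfolding is_unitary_def by auto
  have UC: "U \<in> carrier_mat D D" and VC: "V \<in> carrier_mat D D" using U V unfolding is_unitary_def by auto
  define aU where "aU = query_op D ?w (ctrl A t) U *\<^sub>v run_state D A U t"
  define aV where "aV = query_op D ?w (ctrl A t) V *\<^sub>v run_state D A V t"
  have eU: "run_state D A U (Suc t) = gates A (Suc t) *\<^sub>v aU" unfolding aU_def using hU by simp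
  have eV: "run_state D A V (Suc t) = gates A (Suc t) *\<^sub>v aV" unfolding aV_def using hV by simp
  have daU: "dim_vec aU = ?n" and daV: "dim_vec aV = ?n" unfolding aU_def aV_def by (simp_all add: query_op_def)
  have n1: "L2_set (\<lambda>r. cmod (run_state D A V (Suc t) $ r)) {..<?n} = L2_set (\<lambda>r. cmod (aV $ r)) {..<?n}"
    unfolding eV by (rule unitary_L2[OF G daV])
  have n2: "L2_set (\<lambda>r. cmod (aV $ r)) {..<?n} \<le> 1"
    unfolding aV_def using query_unitary_L2[OF V IH(2), of "ctrl A t"] IH(3) by linarith
  have d1: "L2_set (\<lambda>r. cmod (run_state D A U (Suc t) $ r - run_state D A V (Suc t) $ r)) {..<?n}
      = L2_set (\<lambda>r. cmod (aU $ r - aV $ r)) {..<?n}"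
    unfolding eU eV by (rule unitary_L2_diff[OF G daU daV])
  let ?b = "query_op D ?w (ctrl A t) U *\<^sub>v run_state D A V t"
  have d2: "L2_set (\<lambda>r. cmod (aU $ r - aV $ r)) {..<?n}
      \<le> L2_set (\<lambda>r. cmod (aU $ r - ?b $ r)) {..<?n} + L2_set (\<lambda>r. cmod (?b $ r - aV $ r)) {..<?n}"
    by (rule L2_tri)
  have d3: "L2_set (\<lambda>r. cmod (aU $ r - ?b $ r)) {..<?n} \<le> real t * \<delta>"
    unfolding aU_def using query_unitary_diff[OF U IH(1) IH(2), of "ctrl A t"] IH(4) by linarith
  have d4: "L2_set (\<lambda>r. cmod (?b $ r - aV $ r)) {..<?n} \<le> \<delta> * 1"
  proof -
    have "L2_set (\<lambda>r. cmod (?b $ r - aV $ r)) {..<?n} \<le> \<delta> * L2_set (\<lambda>r. cmod (run_state D A V t $ r)) {..<?n}"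
      unfolding aV_def by (rule query_oracle_diff[OF UC VC d HB IH(2)])
    also have "\<dots> \<le> \<delta> * 1" using IH(3) d by (intro mult_left_mono) auto
    finally show ?thesis .
  qed
  have dims: "dim_vec (run_state D A U (Suc t)) = ?n" "dim_vec (run_state D A V (Suc t)) = ?n"
    unfolding eU eV using GC by auto
  show ?case using dims n1 n2 d1 d2 d3 d4 by (simp add: algebra_simps)
qed


lemma L2_subset:
  assumes "finite B" "A \<subseteq> B"
  shows "L2_set f A \<le> L2_set f B"
  unfolding L2_set_def by (rule real_sqrt_le_mono, rule sum_mono2) (use assms in auto)

lemma L2_sq: "finite A \<Longrightarrow> (L2_set f A)\<^sup>2 = (\<Sum>i\<in>A. (f i)\<^sup>2)"
  unfolding L2_set_def by (simp add: sum_nonneg)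

lemma prob_diff:
  assumes S: "S \<subseteq> {..<n}"
    and a1: "L2_set (\<lambda>r. cmod (a $ r)) {..<n} \<le> 1" and b1: "L2_set (\<lambda>r. cmod (b $ r)) {..<n} \<le> 1"
  shows "(\<Sum>j\<in>S. (cmod (a $ j))\<^sup>2) - (\<Sum>j\<in>S. (cmod (b $ j))\<^sup>2) \<le> 2 * L2_set (\<lambda>r. cmod (a $ r - b $ r)) {..<n}"
proof -
  have fS: "finite S" using S finite_subset by blast
  define x where "x = L2_set (\<lambda>r. cmod (a $ r)) S"
  define y where "y = L2_set (\<lambda>r. cmod (b $ r)) S"
  define z where "z = L2_set (\<lambda>r. cmod (a $ r - b $ r)) S"
  have x1: "x \<le> 1" unfolding x_def using L2_subset[OF _ S] a1 by (meson finite_lessThan order_trans)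
  have y1: "y \<le> 1" unfolding y_def using L2_subset[OF _ S] b1 by (meson finite_lessThan order_trans)
  have zZ: "z \<le> L2_set (\<lambda>r. cmod (a $ r - b $ r)) {..<n}" unfolding z_def using L2_subset[OF _ S] by simp
  have x0: "x \<ge> 0" "y \<ge> 0" unfolding x_def y_def by simp_all
  have xyz: "x \<le> z + y"
  proof -
    have "x = L2_set (\<lambda>r. cmod (a $ r - 0)) S" unfolding x_def by simp
    also have "\<dots> \<le> z + L2_set (\<lambda>r. cmod (b $ r - 0)) S" unfolding z_def by (rule L2_tri)
    finally show ?thesis unfolding y_def by simp
  qed
  have "(\<Sum>j\<in>S. (cmod (a $ j))\<^sup>2) - (\<Sum>j\<in>S. (cmod (b $ j))\<^sup>2) = x\<^sup>2 - y\<^sup>2"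
    unfolding x_def y_def using L2_sq[OF fS] by simp
  also have "\<dots> = (x - y) * (x + y)" by (simp add: power2_eq_square algebra_simps)
  also have "\<dots> \<le> 2 * z"
  proof (cases "x \<le> y")
    case True
    then have "(x - y) * (x + y) \<le> 0" using x0 by (intro mult_nonpos_nonneg) auto
    then show ?thesis unfolding z_def by (smt (verit) L2_set_nonneg)
  next
    case False
    have "(x - y) * (x + y) \<le> z * 2" using xyz x1 y1 x0 False
      by (intro mult_mono) (auto simp: z_def)
    then show ?thesis by simp
  qed
  finally show ?thesis using zZ by simp
qed

definition hh :: "nat \<Rightarrow> (nat \<Rightarrow> real) \<Rightarrow> complex mat" where
  "hh d p = mat d d (\<lambda>(i,j). (if i = j then 1 else 0) - complex_of_real (p i * p j))"

lemma hh_carrier: "hh d p \<in> carrier_mat d d" by (simp add: hh_def)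

lemma hh_cadj: "cadj (hh d p) = hh d p"
  by (rule eq_matI) (auto simp: cadj_def hh_def)

lemma sum_single:
  fixes f :: "nat \<Rightarrow> 'a::comm_monoid_add"
  assumes "i < d" "\<And>j. j < d \<Longrightarrow> j \<noteq> i \<Longrightarrow> f j = 0"
  shows "(\<Sum>j<d. f j) = f i"
proof -
  have "(\<Sum>j<d. f j) = (\<Sum>j<d. if j = i then f j else 0)"
    by (rule sum.cong) (use assms in auto)
  also have "\<dots> = f i" using assms(1) by (subst sum.delta) auto
  finally show ?thesis .
qed

lemma hh_sq_real:
  fixes p :: "nat \<Rightarrow> real" and d i k :: nat
  assumes p2: "(\<Sum>j<d. (p j)\<^sup>2) = 2" and i: "i < d" and k: "k < d"
  shows "(\<Sum>j<d. ((if i = j then 1 else 0) - p i * p j) * ((if j = k then 1 else 0) - p j * p k))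
       = (if i = k then 1 else (0::real))"
proof -
  have "(\<Sum>j<d. ((if i = j then 1 else 0) - p i * p j) * ((if j = k then 1 else 0) - p j * p k))
     = (\<Sum>j<d. (if i = j then 1 else 0) * (if j = k then 1 else 0)) - (\<Sum>j<d. (if i = j then 1 else 0) * (p j * p k))
       - (\<Sum>j<d. p i * p j * (if j = k then 1 else 0)) + (\<Sum>j<d. p i * p k * (p j)\<^sup>2)"
    by (simp add: sum.distrib sum_subtractf algebra_simps power2_eq_square)
  also have "(\<Sum>j<d. (if i = j then 1 else 0) * (if j = k then 1 else 0)) = (if i = k then 1 else (0::real))"
    by (subst sum_single[OF i]) auto
  also have "(\<Sum>j<d. (if i = j then 1 else 0) * (p j * p k)) = p i * p k"
    by (subst sum_single[OF i]) auto
  also have "(\<Sum>j<d. p i * p j * (if j = k then 1 else 0)) = p i * p k"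
    by (subst sum_single[OF k]) auto
  also have "(\<Sum>j<d. p i * p k * (p j)\<^sup>2) = p i * p k * 2"
    by (simp add: sum_distrib_left[symmetric] p2)
  finally show ?thesis by simp
qed

lemma hh_unitary:
  assumes p2: "(\<Sum>j<d. (p j)\<^sup>2) = 2"
  shows "is_unitary d (hh d p)"
proof -
  have HH: "hh d p * hh d p = 1\<^sub>m d"
  proof (rule eq_matI)
    fix i k assume ik: "i < dim_row (1\<^sub>m d)" "k < dim_col (1\<^sub>m d)"
    then have i: "i < d" and k: "k < d" by auto
    have "(hh d p * hh d p) $$ (i,k) = (\<Sum>j<d. hh d p $$ (i,j) * hh d p $$ (j,k))"
      using i k by (simp add: hh_def scalar_prod_def atLeast0LessThan)
    also have "\<dots> = (\<Sum>j<d. complex_of_real (((if i = j then 1 else 0) - p i * p j) * ((if j = k then 1 else 0) - p j * p k)))"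
      by (rule sum.cong) (use i k in \<open>auto simp: hh_def\<close>)
    also have "\<dots> = complex_of_real (if i = k then 1 else 0)"
      unfolding of_real_sum[symmetric] hh_sq_real[OF p2 i k] by simp
    also have "\<dots> = 1\<^sub>m d $$ (i,k)" using i k by simp
    finally show "(hh d p * hh d p) $$ (i,k) = 1\<^sub>m d $$ (i,k)" .
  qed (auto simp: hh_def)
  show ?thesis unfolding is_unitary_def using HH hh_carrier hh_cadj by simp
qed

lemma hh_mv:
  assumes "dim_vec s = d" "i < d"
  shows "(hh d p *\<^sub>v s) $ i = s $ i - complex_of_real (p i) * (\<Sum>j<d. complex_of_real (p j) * s $ j)"
proof -
  have "(hh d p *\<^sub>v s) $ i = (\<Sum>j<d. hh d p $$ (i,j) * s $ j)"
    by (rule mv_entry[OF hh_carrier assms])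
  also have "\<dots> = (\<Sum>j<d. (if j = i then s $ j else 0) - complex_of_real (p i) * (complex_of_real (p j) * s $ j))"
    by (rule sum.cong) (use assms in \<open>auto simp: hh_def algebra_simps\<close>)
  also have "\<dots> = s $ i - complex_of_real (p i) * (\<Sum>j<d. complex_of_real (p j) * s $ j)"
    using assms by (simp add: sum_subtractf sum_distrib_left)
  finally show ?thesis .
qed


lemma cs_bound:
  fixes p :: "nat \<Rightarrow> real"
  shows "cmod (\<Sum>j<d. complex_of_real (p j) * s $ j) \<le> L2_set p {..<d} * L2_set (\<lambda>j. cmod (s $ j)) {..<d}"
proof -
  have "cmod (\<Sum>j<d. complex_of_real (p j) * s $ j) \<le> (\<Sum>j<d. cmod (complex_of_real (p j) * s $ j))"
    by (rule norm_sum)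
  also have "\<dots> = (\<Sum>j<d. \<bar>p j\<bar> * \<bar>cmod (s $ j)\<bar>)" by (simp add: norm_mult)
  also have "\<dots> \<le> L2_set p {..<d} * L2_set (\<lambda>j. cmod (s $ j)) {..<d}" by (rule L2_set_mult_ineq)
  finally show ?thesis .
qed

lemma L2_abs: "L2_set (\<lambda>i. \<bar>f i\<bar>) A = L2_set f A"
  unfolding L2_set_def by simp

lemma hh_diff:
  fixes p q :: "nat \<Rightarrow> real"
  assumes p2: "(\<Sum>j<d. (p j)\<^sup>2) = 2" and q2: "(\<Sum>j<d. (q j)\<^sup>2) = 2" and s: "dim_vec s = d"
  shows "L2_set (\<lambda>i. cmod ((hh d p *\<^sub>v s) $ i - (hh d q *\<^sub>v s) $ i)) {..<d}
      \<le> (2 * sqrt 2 * L2_set (\<lambda>i. q i - p i) {..<d}) * L2_set (\<lambda>i. cmod (s $ i)) {..<d}"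
proof -
  define A where "A = (\<Sum>j<d. complex_of_real (p j) * s $ j)"
  define B where "B = (\<Sum>j<d. complex_of_real (q j) * s $ j)"
  define Ls where "Ls = L2_set (\<lambda>i. cmod (s $ i)) {..<d}"
  define Lqp where "Lqp = L2_set (\<lambda>i. q i - p i) {..<d}"
  have Lp: "L2_set p {..<d} = sqrt 2" unfolding L2_set_def p2 ..
  have Lq: "L2_set q {..<d} = sqrt 2" unfolding L2_set_def q2 ..
  have BA: "B - A = (\<Sum>j<d. complex_of_real (q j - p j) * s $ j)"
    unfolding A_def B_def by (simp add: sum_subtractf[symmetric] algebra_simps)
  have cB: "cmod B \<le> sqrt 2 * Ls" unfolding B_def Ls_def using cs_bound[of q s d] Lq by simp
  have cBA: "cmod (B - A) \<le> Lqp * Ls" unfolding BA Ls_def Lqp_def by (rule cs_bound)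
  have ent: "(hh d p *\<^sub>v s) $ i - (hh d q *\<^sub>v s) $ i = complex_of_real (q i - p i) * B + complex_of_real (p i) * (B - A)"
    if "i < d" for i
    using that s unfolding A_def B_def by (simp add: hh_mv algebra_simps)
  have "L2_set (\<lambda>i. cmod ((hh d p *\<^sub>v s) $ i - (hh d q *\<^sub>v s) $ i)) {..<d}
      \<le> L2_set (\<lambda>i. \<bar>q i - p i\<bar> * cmod B + \<bar>p i\<bar> * cmod (B - A)) {..<d}"
  proof (rule L2_set_mono)
    fix i assume "i \<in> {..<d}"
    then have "i < d" by simp
    then show "cmod ((hh d p *\<^sub>v s) $ i - (hh d q *\<^sub>v s) $ i) \<le> \<bar>q i - p i\<bar> * cmod B + \<bar>p i\<bar> * cmod (B - A)"
      using ent[of i] norm_triangle_ineq[of "complex_of_real (q i - p i) * B" "complex_of_real (p i) * (B - A)"]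
      by (simp only: norm_mult norm_of_real ent[OF \<open>i < d\<close>])
  qed simp
  also have "\<dots> \<le> L2_set (\<lambda>i. \<bar>q i - p i\<bar> * cmod B) {..<d} + L2_set (\<lambda>i. \<bar>p i\<bar> * cmod (B - A)) {..<d}"
    by (rule L2_set_triangle_ineq)
  also have "\<dots> = Lqp * cmod B + sqrt 2 * cmod (B - A)"
    unfolding Lqp_def Lp[symmetric] L2_abs[symmetric, of "\<lambda>i. q i - p i"] L2_abs[symmetric, of p]
    by (simp add: L2_set_left_distrib)
  also have "\<dots> \<le> Lqp * (sqrt 2 * Ls) + sqrt 2 * (Lqp * Ls)"
    using cB cBA by (intro add_mono mult_left_mono) (auto simp: Lqp_def)
  also have "\<dots> = (2 * sqrt 2 * Lqp) * Ls" by (simp add: algebra_simps)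
  finally show ?thesis unfolding Lqp_def Ls_def .
qed


definition cc :: "nat \<Rightarrow> real \<Rightarrow> real" where
  "cc K a = sqrt ((1 - a\<^sup>2) / K)"

definition gp :: "nat \<Rightarrow> real \<Rightarrow> nat \<Rightarrow> real" where
  "gp K a x = (if x = 0 then 1 else if x = 1 then - a else if 2 \<le> x \<and> x \<le> K + 1 then - cc K a else 0)"

definition pv :: "nat \<Rightarrow> nat \<Rightarrow> real \<Rightarrow> nat \<Rightarrow> real" where
  "pv m K a i = (if i mod m = 0 then gp K a (i div m) else 0)"

lemma sum_mod:
  fixes G :: "nat \<Rightarrow> 'a::comm_monoid_add"
  assumes m: "m \<ge> 1"
  shows "(\<Sum>i<n*m. if i mod m = 0 then G (i div m) else 0) = (\<Sum>x<n. G x)"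
proof -
  have "(\<Sum>i<n*m. if i mod m = 0 then G (i div m) else 0)
      = (\<Sum>x<n. \<Sum>j<m. if (x*m+j) mod m = 0 then G ((x*m+j) div m) else 0)"
    by (rule sum_split_mult)
  also have "\<dots> = (\<Sum>x<n. G x)"
  proof (rule sum.cong[OF refl])
    fix x
    have "(\<Sum>j<m. if (x*m+j) mod m = 0 then G ((x*m+j) div m) else 0)
        = (if (x*m+0) mod m = 0 then G ((x*m+0) div m) else 0)"
      by (rule sum_single) (use m in auto)
    also have "\<dots> = G x" using m by simp
    finally show "(\<Sum>j<m. if (x*m+j) mod m = 0 then G ((x*m+j) div m) else 0) = G x" .
  qed
  finally show ?thesis .
qed

lemma sum_gp:
  fixes H :: "real \<Rightarrow> real \<Rightarrow> real"
  assumes H0: "H 0 0 = 0" and n: "n \<ge> K + 2"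
  shows "(\<Sum>x<n. H (gp K a x) (gp K b x)) = H 1 1 + H (-a) (-b) + real K * H (- cc K a) (- cc K b)"
proof -
  let ?F = "\<lambda>x. H (gp K a x) (gp K b x)"
  have "(\<Sum>x<n. ?F x) = (\<Sum>x<K+2. ?F x)"
    by (rule sum.mono_neutral_right) (use n H0 in \<open>auto simp: gp_def\<close>)
  also have "{..<K+2} = {0,1} \<union> {2..<K+2}" by auto
  also have "(\<Sum>x\<in>{0,1} \<union> {2..<K+2}. ?F x) = (\<Sum>x\<in>{0,1}. ?F x) + (\<Sum>x\<in>{2..<K+2}. ?F x)"
    by (rule sum.union_disjoint) auto
  also have "(\<Sum>x\<in>{0,1}. ?F x) = H 1 1 + H (-a) (-b)" by (simp add: gp_def)
  also have "(\<Sum>x\<in>{2..<K+2}. ?F x) = (\<Sum>x\<in>{2..<K+2}. H (- cc K a) (- cc K b))"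
    by (rule sum.cong) (auto simp: gp_def)
  also have "\<dots> = real K * H (- cc K a) (- cc K b)" by simp
  finally show ?thesis by simp
qed

lemma sum_pv:
  fixes H :: "real \<Rightarrow> real \<Rightarrow> real"
  assumes H0: "H 0 0 = 0" and n: "n \<ge> K + 2" and m: "m \<ge> 1"
  shows "(\<Sum>i<n*m. H (pv m K a i) (pv m K b i)) = H 1 1 + H (-a) (-b) + real K * H (- cc K a) (- cc K b)"
proof -
  have "(\<Sum>i<n*m. H (pv m K a i) (pv m K b i)) = (\<Sum>i<n*m. if i mod m = 0 then H (gp K a (i div m)) (gp K b (i div m)) else 0)"
    by (rule sum.cong) (auto simp: pv_def H0)
  also have "\<dots> = (\<Sum>x<n. H (gp K a x) (gp K b x))" by (rule sum_mod[OF m])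
  also have "\<dots> = H 1 1 + H (-a) (-b) + real K * H (- cc K a) (- cc K b)" by (rule sum_gp[where H=H, OF H0 n])
  finally show ?thesis .
qed

lemma pv_norm2:
  assumes n: "n \<ge> K + 2" and m: "m \<ge> 1" and K: "K \<ge> 1" and a: "\<bar>a\<bar> \<le> 1"
  shows "(\<Sum>i<n*m. (pv m K a i)\<^sup>2) = 2"
proof -
  have "(\<Sum>i<n*m. (pv m K a i)\<^sup>2) = 1 + a\<^sup>2 + real K * (cc K a)\<^sup>2"
    using sum_pv[where H="\<lambda>u v. u\<^sup>2" and a=a and b=a, OF _ n m] by simp
  also have "(cc K a)\<^sup>2 = (1 - a\<^sup>2) / K"
  proof -
    have "a\<^sup>2 \<le> 1" using a by (simp add: abs_square_le_1)
    then show ?thesis unfolding cc_def using K by (subst real_sqrt_pow2) auto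
  qed
  finally show ?thesis using K by simp
qed

lemma pv_diff2:
  assumes n: "n \<ge> K + 2" and m: "m \<ge> 1"
  shows "(\<Sum>i<n*m. (pv m K b i - pv m K a i)\<^sup>2) = (a - b)\<^sup>2 + real K * (cc K a - cc K b)\<^sup>2"
  using sum_pv[where H="\<lambda>u v. (v - u)\<^sup>2" and a=a and b=b, OF _ n m] by (simp add: power2_commute)

lemma pv0: "m \<ge> 1 \<Longrightarrow> pv m K a 0 = 1" by (simp add: pv_def gp_def)

lemma amp_abs_hh:
  assumes m: "m \<ge> 1" and x: "x < n"
  shows "amp_abs n m (hh (n*m) (pv m K a)) x = (if x = 0 then 0 else \<bar>gp K a x\<bar>)"
proof -
  have nm: "0 < n*m" using m x by simp
  have os: "oracle_state n m (hh (n*m) (pv m K a)) $ i = complex_of_real ((if i = 0 then 1 else 0) - pv m K a i)" if "i < n*m" for i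
  proof -
    have "(\<Sum>j<n*m. complex_of_real (pv m K a j) * unit_vec (n*m) 0 $ j) = complex_of_real (pv m K a 0) * unit_vec (n*m) 0 $ 0"
      by (rule sum_single) (use nm in auto)
    then show ?thesis unfolding oracle_state_def using that nm m
      by (simp add: hh_mv pv0)
  qed
  have xm: "x*m+j < n*m" if "j < m" for j
  proof -
    have "x*m+j < x*m + m" using that by simp
    also have "\<dots> = (Suc x)*m" by simp
    also have "\<dots> \<le> n*m" using x by (intro mult_right_mono) auto
    finally show ?thesis .
  qed
  have "(\<Sum>j<m. (cmod (oracle_state n m (hh (n*m) (pv m K a)) $ (x*m+j)))\<^sup>2)
      = (\<Sum>j<m. ((if x*m+j = 0 then 1 else 0) - pv m K a (x*m+j))\<^sup>2)"
    by (rule sum.cong) (auto simp: os xm pv0[OF m] simp del: of_real_diff)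
  also have "\<dots> = ((if x*m+0 = 0 then 1 else 0) - pv m K a (x*m+0))\<^sup>2"
    by (rule sum_single) (use m in \<open>auto simp: pv_def\<close>)
  also have "\<dots> = (if x = 0 then 0 else gp K a x)\<^sup>2"
    using m by (auto simp: pv_def gp_def)
  finally show ?thesis unfolding amp_abs_def by simp
qed


lemma cc_diff:
  assumes K: "K \<ge> 1" and a: "0 \<le> a" "a \<le> 1/2" and b: "0 \<le> b" "b \<le> 1/2"
  shows "real K * (cc K a - cc K b)\<^sup>2 \<le> (a - b)\<^sup>2"
proof -
  define X where "X = sqrt (1 - a\<^sup>2)"
  define Y where "Y = sqrt (1 - b\<^sup>2)"
  have a2: "a\<^sup>2 \<le> (1/2)\<^sup>2" using a by (intro power_mono) auto
  have b2: "b\<^sup>2 \<le> (1/2)\<^sup>2" using b by (intro power_mono) auto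
  have X: "1/2 \<le> X" unfolding X_def by (rule real_le_rsqrt) (use a2 in \<open>simp add: power2_eq_square\<close>)
  have Y: "1/2 \<le> Y" unfolding Y_def by (rule real_le_rsqrt) (use b2 in \<open>simp add: power2_eq_square\<close>)
  have X2: "X\<^sup>2 = 1 - a\<^sup>2" unfolding X_def using a2 by (simp add: power2_eq_square)
  have Y2: "Y\<^sup>2 = 1 - b\<^sup>2" unfolding Y_def using b2 by (simp add: power2_eq_square)
  have sK: "(sqrt (real K))\<^sup>2 = real K" by simp
  have sK0: "sqrt (real K) > 0" using K by simp
  have ccX: "cc K a = X / sqrt K" "cc K b = Y / sqrt K" unfolding cc_def X_def Y_def by (simp_all add: real_sqrt_divide)
  have "real K * (cc K a - cc K b)\<^sup>2 = (X - Y)\<^sup>2"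
    unfolding ccX using sK0 by (simp add: power2_eq_square field_simps)
  also have "\<dots> \<le> (X - Y)\<^sup>2 * (X + Y)\<^sup>2"
  proof -
    have "1 \<le> (X + Y)\<^sup>2" using X Y by (simp add: one_le_power)
    then show ?thesis by (metis mult_left_mono mult.right_neutral zero_le_power2)
  qed
  also have "\<dots> = (X\<^sup>2 - Y\<^sup>2)\<^sup>2" by (simp add: power2_eq_square algebra_simps)
  also have "\<dots> = (a - b)\<^sup>2 * (a + b)\<^sup>2" unfolding X2 Y2 by (simp add: power2_eq_square algebra_simps)
  also have "\<dots> \<le> (a - b)\<^sup>2 * 1"
  proof -
    have "(a + b)\<^sup>2 \<le> 1" using a b by (simp add: abs_square_le_1)
    then show ?thesis by (intro mult_left_mono) auto
  qed
  finally show ?thesis by simp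
qed

lemma main_bound:
  fixes \<epsilon> \<tau> :: real
  assumes e: "0 < \<epsilon>" "\<epsilon> < \<tau>" "\<tau> \<le> 1/2"
    and K: "real K > 1 / (\<tau> - \<epsilon>)\<^sup>2" "K \<ge> 1"
    and n: "n \<ge> K + 2" and m: "m \<ge> 1" and A: "solves_ampfil n m \<epsilon> \<tau> A"
  shows "real (num_queries A) \<ge> 1/96 * (1/\<epsilon> + 1/\<tau>)"
proof -
  define D where "D = n * m"
  define b where "b = (\<tau> - \<epsilon>) * (1 - \<epsilon>)"
  define p where "p = pv m K \<tau>"
  define q where "q = pv m K b"
  define U where "U = hh D p"
  define V where "V = hh D q"
  define T where "T = num_queries A"
  have be: "b = (\<tau> - \<epsilon>) - (\<tau> - \<epsilon>) * \<epsilon>" unfolding b_def by (simp add: algebra_simps)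
  have pe1: "(\<tau> - \<epsilon>) * \<epsilon> > 0" using e by simp
  have pe2: "(\<tau> - \<epsilon>) * \<epsilon> \<le> \<epsilon>" using e by (intro mult_left_le_one_le) auto
  have pe3: "(\<tau> - \<epsilon>) * \<epsilon> \<le> (\<tau> - \<epsilon>)" using e by (intro mult_right_le_one_le) auto
  have b0: "0 \<le> b" and bt: "b < \<tau> - \<epsilon>" and tb: "\<tau> - b \<le> 2 * \<epsilon>" and tb0: "0 \<le> \<tau> - b"
    using be pe1 pe2 pe3 e by linarith+
  have tau1: "\<bar>\<tau>\<bar> \<le> 1" and bb1: "\<bar>b\<bar> \<le> 1" using e b0 bt by auto
  have p2: "(\<Sum>j<D. (p j)\<^sup>2) = 2" unfolding D_def p_def by (rule pv_norm2[OF n m K(2) tau1])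
  have q2: "(\<Sum>j<D. (q j)\<^sup>2) = 2" unfolding D_def q_def by (rule pv_norm2[OF n m K(2) bb1])
  have UU: "is_unitary D U" and hU: "cadj U = U" unfolding U_def using hh_unitary[OF p2] hh_cadj by auto
  have VV: "is_unitary D V" and hV: "cadj V = V" unfolding V_def using hh_unitary[OF q2] hh_cadj by auto
  have n1: "1 < n" using n K(2) by simp
  have yes: "ampfil_yes n m \<tau> U"
    unfolding ampfil_yes_def
  proof (intro exI[of _ 1] conjI)
    show "1 < n" by (rule n1)
    show "\<tau> \<le> amp_abs n m U 1" unfolding U_def D_def p_def
      using amp_abs_hh[OF m n1, of K \<tau>] e by (simp add: gp_def)
  qed
  have sq_pos: "(\<tau> - \<epsilon>)\<^sup>2 > 0" using e by simp
  have Kpos: "real K > 0" using K(2) by simp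
  have "(\<tau> - \<epsilon>)\<^sup>2 * real K > 1" using K(1) sq_pos by (simp add: field_simps)
  then have invK: "1 / real K < (\<tau> - \<epsilon>)\<^sup>2" using Kpos by (simp add: field_simps)
  have ccb: "cc K b < \<tau> - \<epsilon>"
  proof -
    have "(1 - b\<^sup>2) / real K \<le> 1 / real K" using Kpos by (intro divide_right_mono) auto
    also have "\<dots> < (\<tau> - \<epsilon>)\<^sup>2" by (rule invK)
    finally have "sqrt ((1 - b\<^sup>2) / real K) < sqrt ((\<tau> - \<epsilon>)\<^sup>2)" by (rule real_sqrt_less_mono)
    then show ?thesis unfolding cc_def using e by simp
  qed
  have "b\<^sup>2 \<le> 1" using bb1 by (simp add: abs_square_le_1)
  then have ccb0: "cc K b \<ge> 0" unfolding cc_def by simp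
  have no: "ampfil_no n m \<epsilon> \<tau> V"
    unfolding ampfil_no_def
  proof (intro allI impI)
    fix x assume x: "x < n"
    have "amp_abs n m V x = (if x = 0 then 0 else \<bar>gp K b x\<bar>)"
      unfolding V_def D_def q_def by (rule amp_abs_hh[OF m x])
    also have "\<dots> < \<tau> - \<epsilon>"
      using e b0 bt ccb ccb0 by (auto simp: gp_def)
    finally show "amp_abs n m V x < \<tau> - \<epsilon>" .
  qed
  have wf: "wf_qalg D A" and AU: "\<And>W. is_unitary D W \<Longrightarrow>
        (ampfil_yes n m \<tau> W \<longrightarrow> accept_prob D A W \<ge> 2/3) \<and>
        (ampfil_no n m \<epsilon> \<tau> W \<longrightarrow> accept_prob D A W \<le> 1/3)"
    using A unfolding solves_ampfil_def D_def by blast+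
  have pU: "accept_prob D A U \<ge> 2/3" using AU[OF UU] yes by blast
  have pV: "accept_prob D A V \<le> 1/3" using AU[OF VV] no by blast
  define \<delta> where "\<delta> = 2 * sqrt 2 * L2_set (\<lambda>i. q i - p i) {..<D}"
  define \<delta>' where "\<delta>' = 2 * sqrt 2 * L2_set (\<lambda>i. p i - q i) {..<D}"
  have d0: "\<delta> \<ge> 0" "\<delta>' \<ge> 0" unfolding \<delta>_def \<delta>'_def by auto
  have HB: "L2_set (\<lambda>i. cmod ((U *\<^sub>v s) $ i - (V *\<^sub>v s) $ i)) {..<D} \<le> \<delta> * L2_set (\<lambda>i. cmod (s $ i)) {..<D}"
    if "dim_vec s = D" for s
    unfolding U_def V_def \<delta>_def by (rule hh_diff[OF p2 q2 that])
  have HB': "L2_set (\<lambda>i. cmod ((V *\<^sub>v s) $ i - (U *\<^sub>v s) $ i)) {..<D} \<le> \<delta>' * L2_set (\<lambda>i. cmod (s $ i)) {..<D}"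
    if "dim_vec s = D" for s
    unfolding U_def V_def \<delta>'_def by (rule hh_diff[OF q2 p2 that])
  let ?w = "work_dim A"
  let ?S = "accept A \<inter> {..<D * ?w}"
  have T: "T \<le> num_queries A" unfolding T_def by simp
  note H1 = hybrid[OF wf UU VV hU hV d0(1) HB T]
  note H2 = hybrid[OF wf VV UU hV hU d0(2) HB' T]
  have "accept_prob D A U - accept_prob D A V
      = (\<Sum>j\<in>?S. (cmod (run_state D A U T $ j))\<^sup>2) - (\<Sum>j\<in>?S. (cmod (run_state D A V T $ j))\<^sup>2)"
    unfolding accept_prob_def T_def ..
  also have "\<dots> \<le> 2 * L2_set (\<lambda>r. cmod (run_state D A U T $ r - run_state D A V T $ r)) {..<D * ?w}"
  proof (rule prob_diff)
    show "?S \<subseteq> {..<D * ?w}" by blast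
    show "L2_set (\<lambda>r. cmod (run_state D A U T $ r)) {..<D * ?w} \<le> 1" using H2 by blast
    show "L2_set (\<lambda>r. cmod (run_state D A V T $ r)) {..<D * ?w} \<le> 1" using H1 by blast
  qed
  also have "\<dots> \<le> 2 * (real T * \<delta>)" using H1 by linarith
  finally have P: "1/3 \<le> 2 * (real T * \<delta>)" using pU pV by simp
  have "(L2_set (\<lambda>i. q i - p i) {..<D})\<^sup>2 = (\<Sum>i<D. (q i - p i)\<^sup>2)" by (rule L2_sq) simp
  also have "\<dots> = (\<tau> - b)\<^sup>2 + real K * (cc K \<tau> - cc K b)\<^sup>2"
    unfolding D_def p_def q_def by (rule pv_diff2[OF n m])
  also have "\<dots> \<le> (\<tau> - b)\<^sup>2 + (\<tau> - b)\<^sup>2"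
    using cc_diff[OF K(2), of \<tau> b] e b0 bt by simp
  also have "\<dots> \<le> 8 * \<epsilon>\<^sup>2"
  proof -
    have "(\<tau> - b)\<^sup>2 \<le> (2 * \<epsilon>)\<^sup>2" using tb tb0 by (intro power_mono) auto
    then show ?thesis by (simp add: power_mult_distrib)
  qed
  finally have L8: "(L2_set (\<lambda>i. q i - p i) {..<D})\<^sup>2 \<le> 8 * \<epsilon>\<^sup>2" .
  have "\<delta>\<^sup>2 = 8 * (L2_set (\<lambda>i. q i - p i) {..<D})\<^sup>2"
    unfolding \<delta>_def by (simp add: power_mult_distrib)
  also have "\<dots> \<le> (8 * \<epsilon>)\<^sup>2" using L8 by (simp add: power_mult_distrib)
  finally have "\<delta> \<le> 8 * \<epsilon>" by (rule power2_le_imp_le) (use e in auto)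
  then have "real T * \<delta> \<le> real T * (8 * \<epsilon>)" by (intro mult_left_mono) auto
  moreover have "real T * (8 * \<epsilon>) = 8 * (real T * \<epsilon>)" "48 * real T * \<epsilon> = 48 * (real T * \<epsilon>)" by simp_all
  ultimately have P2: "1 \<le> 48 * real T * \<epsilon>" using P by linarith
  have "1/96 * (1/\<epsilon> + 1/\<tau>) \<le> 1/96 * (2/\<epsilon>)"
  proof -
    have "1/\<tau> \<le> 1/\<epsilon>" using e by (intro divide_left_mono) auto
    then show ?thesis by simp
  qed
  also have "\<dots> = 1 / (48 * \<epsilon>)" by simp
  also have "\<dots> \<le> real T" using P2 e by (simp add: field_simps)
  finally show ?thesis unfolding T_def .
qed


theorem theorem9:
  "\<exists>c>0. \<forall>\<epsilon> \<tau>::real. 0 < \<epsilon> \<and> \<epsilon> < \<tau> \<and> \<tau> \<le> 1/2 \<longrightarrow>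
     (\<exists>N. \<forall>n\<ge>N. \<forall>m\<ge>1. \<forall>A. solves_ampfil n m \<epsilon> \<tau> A \<longrightarrow>
        real (num_queries A) \<ge> c * (1/\<epsilon> + 1/\<tau>))"
proof (intro exI[of _ "1/96"] conjI allI impI)
  show "(0::real) < 1/96" by simp
  fix \<epsilon> \<tau> :: real
  assume e: "0 < \<epsilon> \<and> \<epsilon> < \<tau> \<and> \<tau> \<le> 1/2"
  define r where "r = 1 / (\<tau> - \<epsilon>)\<^sup>2"
  define K where "K = nat \<lceil>r\<rceil> + 1"
  have "r \<le> real (nat \<lceil>r\<rceil>)" by linarith
  then have K1: "real K > r" unfolding K_def by simp
  have K2: "K \<ge> 1" unfolding K_def by simp
  show "\<exists>N. \<forall>n\<ge>N. \<forall>m\<ge>1. \<forall>A. solves_ampfil n m \<epsilon> \<tau> A \<longrightarrow>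
        real (num_queries A) \<ge> 1/96 * (1/\<epsilon> + 1/\<tau>)"
  proof (intro exI[of _ "K + 2"] allI impI)
    fix n m A
    assume "K + 2 \<le> n" "1 \<le> m" "solves_ampfil n m \<epsilon> \<tau> A"
    then show "real (num_queries A) \<ge> 1/96 * (1/\<epsilon> + 1/\<tau>)"
      using main_bound[of \<epsilon> \<tau> K n m A] e K1 K2 unfolding r_def by blast
  qed
qed

end
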